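(* In the setting below, assume in addition that $\Sigma$ is connected and that the set $Z=\{s\in(0,\infty):2sF''(s)+F'(s)=0\}$ is a discrete subset of $(0,\infty)$. If $X$ satisfies the Euler–Lagrange equations of $\int_\Sigma d^d\xi\,F(\gamma_v)$, then $\gamma_v$ is equal to a constant $c>0$ on $\Sigma$. If moreover $F'(c)\neq0$, then $X$ also satisfies the Euler–Lagrange equations of the Schild action $\int_\Sigma d^d\xi\,\gamma_v$ and of the Nambu–Goto action $\int_\Sigma d^d\xi\,\sqrt{\gamma_v}$.
   Context: Setting: $\Sigma\subset\mathbb{R}^d$ open with coordinates $\xi^a$, $M\subset\mathbb{R}^D$ open, $F$ a $C^2$ function on $(0,\infty)$, $X:\Sigma\to M$ smooth with $\gamma_v>0$. A volume metric (of degree $d$) on $M$ is a smooth field of components $V_{[\mu_1\cdots\mu_d][\nu_1\cdots\nu_d]}(X)$ that is totally antisymmetric within each of the two $d$-tuples of indices and symmetric under exchange of the two $d$-tuples. Define $\sigma^{\mu_1\cdots\mu_d}=\epsilon^{a_1\cdots a_d}\partial_{a_1}X^{\mu_1}\cdots\partial_{a_d}X^{\mu_d}$ ($\epsilon$ the Levi-Civita symbol) and $\gamma_v=V_{[\mu_1\cdots\mu_d][\nu_1\cdots\nu_d]}(X)\,\sigma^{\mu_1\cdots\mu_d}\sigma^{\nu_1\cdots\nu_d}$. The Euler–Lagrange equations of $\int d^d\xi\,L(X,\partial X)$ are $\partial L/\partial X^\alpha-\partial_a\big(\partial L/\partial(\partial_aX^\alpha)\big)=0$. Riemannian and (for $d=2$)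 areal metrics are special cases of volume metrics. *)

theory Defs
  imports "HOL-Analysis.Analysis" "HOL-Combinatorics.Permutations"
begin

definition dirderiv :: "('a::real_normed_vector \<Rightarrow> real) \<Rightarrow> 'a \<Rightarrow> 'a \<Rightarrow> real" where
  "dirderiv f x v = deriv (\<lambda>t. f (x + t *\<^sub>R v)) 0"

fun iter_partial :: "'n::finite list \<Rightarrow> (real^'n \<Rightarrow> real) \<Rightarrow> real^'n \<Rightarrow> real" where
  "iter_partial [] f = f"
| "iter_partial (i # is) f = (\<lambda>x. dirderiv (iter_partial is f) x (axis i 1))"

definition smooth_on :: "(real^'n::finite) set \<Rightarrow> (real^'n \<Rightarrow> real) \<Rightarrow> bool" where
  "smooth_on S f \<longleftrightarrow> (\<forall>is. \<forall>x\<in>S. iter_partial is f differentiable (at x))"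

definition levi_civita :: "('d::finite \<Rightarrow> 'd) \<Rightarrow> real" where
  "levi_civita a = (if a permutes (UNIV::'d set) then of_int (sign a) else 0)"

text \<open>P $ a $ mu plays the role of the derivative d_a X^mu.
  sigma^{mu_1...mu_d} = eps^{a_1...a_d} P_{a_1}^{mu_1} ... P_{a_d}^{mu_d};
  a d-tuple of target indices is a map mu :: 'd => 'D (position j |-> mu_j).\<close>
definition sigma :: "real^'D^'d::finite \<Rightarrow> ('d \<Rightarrow> 'D::finite) \<Rightarrow> real" where
  "sigma P \<mu> = (\<Sum>a\<in>(UNIV::('d \<Rightarrow> 'd) set). levi_civita a * (\<Prod>j\<in>UNIV. P $ (a j) $ (\<mu> j)))"

definition gamma_v ::
  "(real^'D \<Rightarrow> ('d \<Rightarrow> 'D) \<Rightarrow> ('d \<Rightarrow> 'D) \<Rightarrow> real) \<Rightarrow> real^'D::finite \<Rightarrow> real^'D^'d::finite \<Rightarrow> real" where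
  "gamma_v V x P = (\<Sum>\<mu>\<in>UNIV. \<Sum>\<nu>\<in>UNIV. V x \<mu> \<nu> * sigma P \<mu> * sigma P \<nu>)"

definition volume_metric ::
  "(real^'D::finite) set \<Rightarrow> (real^'D \<Rightarrow> ('d::finite \<Rightarrow> 'D) \<Rightarrow> ('d \<Rightarrow> 'D) \<Rightarrow> real) \<Rightarrow> bool" where
  "volume_metric M V \<longleftrightarrow>
     (\<forall>\<mu> \<nu>. smooth_on M (\<lambda>x. V x \<mu> \<nu>)) \<and>
     (\<forall>x\<in>M. \<forall>\<mu> \<nu>. V x \<mu> \<nu> = V x \<nu> \<mu>) \<and>
     (\<forall>x\<in>M. \<forall>\<mu> \<nu> i j. i \<noteq> j \<longrightarrow> V x (\<mu>(i := \<mu> j, j := \<mu> i)) \<nu> = - V x \<mu> \<nu>)"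

definition jac :: "(real^'d::finite \<Rightarrow> real^'D::finite) \<Rightarrow> real^'d \<Rightarrow> real^'D^'d" where
  "jac X \<xi> = (\<chi> a \<mu>. dirderiv (\<lambda>\<eta>. X \<eta> $ \<mu>) \<xi> (axis a 1))"

text \<open>Euler-Lagrange equations of the action int d^d xi L(X, dX) on Sigma:
  dL/dX^alpha - d_a (dL/d(d_a X^alpha)) = 0 at every point of Sigma, for every alpha.\<close>
definition euler_lagrange ::
  "(real^'D \<Rightarrow> real^'D^'d \<Rightarrow> real) \<Rightarrow> (real^'d::finite) set \<Rightarrow> (real^'d \<Rightarrow> real^'D::finite) \<Rightarrow> bool" where
  "euler_lagrange L \<Sigma> X \<longleftrightarrow>
     (\<forall>\<xi>\<in>\<Sigma>. \<forall>\<alpha>.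
        dirderiv (\<lambda>y. L y (jac X \<xi>)) (X \<xi>) (axis \<alpha> 1)
        - (\<Sum>a\<in>UNIV. dirderiv (\<lambda>\<eta>. dirderiv (\<lambda>Q. L (X \<eta>) Q) (jac X \<eta>) (axis a (axis \<alpha> 1))) \<xi> (axis a 1))
        = 0)"

end

theory Submission
  imports Defs
begin

lemma line_deriv:
  fixes f :: "'a::real_normed_vector \<Rightarrow> real"
  assumes "(f has_derivative f') (at (x + t0 *\<^sub>R v))"
  shows "((\<lambda>t. f (x + t *\<^sub>R v)) has_real_derivative f' v) (at t0)"
proof -
  have l: "linear f'" using assms has_derivative_linear by blast
  have "((\<lambda>t. x + t *\<^sub>R v) has_derivative (\<lambda>t. t *\<^sub>R v)) (at t0)"
    by (auto intro!: derivative_eq_intros)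
  from has_derivative_compose[OF this assms]
  have "((\<lambda>t. f (x + t *\<^sub>R v)) has_derivative (\<lambda>t. f' (t *\<^sub>R v))) (at t0)" .
  moreover have "(\<lambda>t. f' (t *\<^sub>R v)) = (\<lambda>t. t * f' v)"
    using l by (simp add: linear_scale)
  moreover have "(\<lambda>t. t * f' v) = (*) (f' v)" by (auto simp: fun_eq_iff)
  ultimately show ?thesis
    by (simp add: has_field_derivative_def)
qed

lemma dirderiv_eq:
  fixes f :: "'a::real_normed_vector \<Rightarrow> real"
  assumes "(f has_derivative f') (at x)"
  shows "dirderiv f x v = f' v"
  unfolding dirderiv_def
  using line_deriv[of f f' x 0 v] assms by (auto intro: DERIV_imp_deriv)

lemma has_derivative_vecI:
  fixes f :: "'a::real_normed_vector \<Rightarrow> real^'n::finite"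
  assumes "\<And>i. ((\<lambda>x. f x $ i) has_derivative (\<lambda>h. f' h $ i)) (at x)"
  shows "(f has_derivative f') (at x)"
proof (subst has_derivative_componentwise_within, intro ballI)
  fix b :: "real^'n" assume "b \<in> Basis"
  then obtain i u where b: "b = axis i u" and "u \<in> Basis" unfolding Basis_vec_def by auto
  then have u: "u = 1" by simp
  show "((\<lambda>x. f x \<bullet> b) has_derivative (\<lambda>x. f' x \<bullet> b)) (at x)"
    unfolding b u inner_axis using assms[of i] by simp
qed

lemma diff_expand:
  fixes f :: "real^'n::finite \<Rightarrow> real"
  assumes "f differentiable (at x)"
  shows "(f has_derivative (\<lambda>v. \<Sum>c\<in>UNIV. v$c * dirderiv f x (axis c 1))) (at x)"
proof -
  obtain f' where d: "(f has_derivative f') (at x)" using assms unfolding differentiable_def by blast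
  have l: "linear f'" using d has_derivative_linear by blast
  have "f' v = (\<Sum>c\<in>UNIV. v$c * dirderiv f x (axis c 1))" for v
  proof -
    have "f' v = f' (\<Sum>c\<in>UNIV. (v$c) *\<^sub>R axis c 1)"
      using basis_expansion[of v] by (simp add: scalar_mult_eq_scaleR)
    also have "\<dots> = (\<Sum>c\<in>UNIV. v$c * f' (axis c 1))"
      using l by (simp add: linear_sum linear_scale)
    finally show ?thesis using dirderiv_eq[OF d] by simp
  qed
  then have "f' = (\<lambda>v. \<Sum>c\<in>UNIV. v$c * dirderiv f x (axis c 1))" by auto
  then show ?thesis using d by simp
qed

lemma line_dirderiv:
  fixes f :: "'a::real_normed_vector \<Rightarrow> real"
  assumes "f differentiable (at (x + t0 *\<^sub>R v))"
  shows "((\<lambda>t. f (x + t *\<^sub>R v)) has_real_derivative dirderiv f (x + t0 *\<^sub>R v) v) (at t0)"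
proof -
  obtain f' where d: "(f has_derivative f') (at (x + t0 *\<^sub>R v))"
    using assms unfolding differentiable_def by blast
  show ?thesis using line_deriv[OF d] dirderiv_eq[OF d] by simp
qed

lemma mvt_square:
  fixes f :: "'a::real_normed_vector \<Rightarrow> real"
  assumes df: "\<forall>y\<in>ball x r. f differentiable (at y)"
    and du: "\<forall>y\<in>ball x r. (\<lambda>z. dirderiv f z u) differentiable (at y)"
    and h: "0 < h" "h * (norm u + norm v) < r"
  shows "\<exists>s t. 0 < s \<and> s < h \<and> 0 < t \<and> t < h \<and>
     f (x + h *\<^sub>R u + h *\<^sub>R v) - f (x + h *\<^sub>R u) - f (x + h *\<^sub>R v) + f x
       = h^2 * dirderiv (\<lambda>z. dirderiv f z u) (x + s *\<^sub>R u + t *\<^sub>R v) v"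
proof -
  have inb: "x + s *\<^sub>R u + t *\<^sub>R v \<in> ball x r" if "0 \<le> s" "s \<le> h" "0 \<le> t" "t \<le> h" for s t
  proof -
    have "norm (s *\<^sub>R u + t *\<^sub>R v) \<le> s * norm u + t * norm v"
      using norm_triangle_ineq[of "s *\<^sub>R u" "t *\<^sub>R v"] that by simp
    also have "\<dots> \<le> h * norm u + h * norm v"
      using that by (intro add_mono mult_right_mono) auto
    finally have "norm (s *\<^sub>R u + t *\<^sub>R v) < r" using h by (simp add: algebra_simps)
    moreover have "dist x (x + s *\<^sub>R u + t *\<^sub>R v) = norm (s *\<^sub>R u + t *\<^sub>R v)"
      by (metis add.assoc add_diff_cancel_left' dist_commute dist_norm)
    ultimately show ?thesis by simp
  qed
  define \<phi> where "\<phi> s = f ((x + h *\<^sub>R v) + s *\<^sub>R u) - f (x + s *\<^sub>R u)" for s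
  have "\<exists>s. 0 < s \<and> s < h \<and> \<phi> h - \<phi> 0 = (h - 0) *
      (dirderiv f ((x + h *\<^sub>R v) + s *\<^sub>R u) u - dirderiv f (x + s *\<^sub>R u) u)"
  proof (rule MVT2[of 0 h \<phi> "\<lambda>s. dirderiv f ((x + h *\<^sub>R v) + s *\<^sub>R u) u - dirderiv f (x + s *\<^sub>R u) u"])
    fix s assume s: "0 \<le> s" "s \<le> h"
    have a: "f differentiable (at ((x + h *\<^sub>R v) + s *\<^sub>R u))"
      using df inb[of s h] s h by (simp add: add_ac)
    have b: "f differentiable (at (x + s *\<^sub>R u))"
      using df inb[of s 0] s h by (simp add: add_ac)
    show "(\<phi> has_real_derivative
      dirderiv f ((x + h *\<^sub>R v) + s *\<^sub>R u) u - dirderiv f (x + s *\<^sub>R u) u) (at s)"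
      unfolding \<phi>_def[abs_def] by (intro DERIV_diff line_dirderiv a b)
  qed (use h in auto)
  then obtain s where s: "0 < s" "s < h" and e1': "\<phi> h - \<phi> 0 = (h - 0) *
      (dirderiv f ((x + h *\<^sub>R v) + s *\<^sub>R u) u - dirderiv f (x + s *\<^sub>R u) u)"
    by blast
  have q1: "(x + h *\<^sub>R v) + s *\<^sub>R u = (x + s *\<^sub>R u) + h *\<^sub>R v" by (simp only: add_ac)
  have q2: "x + s *\<^sub>R u = (x + s *\<^sub>R u) + 0 *\<^sub>R v" by simp
  have e1: "\<phi> h - \<phi> 0 = h *
      (dirderiv f ((x + s *\<^sub>R u) + h *\<^sub>R v) u - dirderiv f ((x + s *\<^sub>R u) + 0 *\<^sub>R v) u)"
    using e1' unfolding q1 by (subst (asm) q2) simp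
  have "\<exists>t. 0 < t \<and> t < h \<and> dirderiv f ((x + s *\<^sub>R u) + h *\<^sub>R v) u - dirderiv f ((x + s *\<^sub>R u) + 0 *\<^sub>R v) u
     = (h - 0) * dirderiv (\<lambda>z. dirderiv f z u) ((x + s *\<^sub>R u) + t *\<^sub>R v) v"
  proof (rule MVT2[of 0 h "\<lambda>t. dirderiv f ((x + s *\<^sub>R u) + t *\<^sub>R v) u" "\<lambda>t. dirderiv (\<lambda>z. dirderiv f z u) ((x + s *\<^sub>R u) + t *\<^sub>R v) v"])
    fix t assume t: "0 \<le> t" "t \<le> h"
    show "((\<lambda>t. dirderiv f ((x + s *\<^sub>R u) + t *\<^sub>R v) u) has_real_derivative
       dirderiv (\<lambda>z. dirderiv f z u) ((x + s *\<^sub>R u) + t *\<^sub>R v) v) (at t)"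
      by (rule line_dirderiv[where f="\<lambda>z. dirderiv f z u"]) (use du inb[of s t] s t in auto)
  qed (use h in auto)
  then obtain t where t: "0 < t" "t < h" and e2: "dirderiv f ((x + s *\<^sub>R u) + h *\<^sub>R v) u - dirderiv f ((x + s *\<^sub>R u) + 0 *\<^sub>R v) u
     = h * dirderiv (\<lambda>z. dirderiv f z u) (x + s *\<^sub>R u + t *\<^sub>R v) v" by auto
  have "f (x + h *\<^sub>R u + h *\<^sub>R v) - f (x + h *\<^sub>R u) - f (x + h *\<^sub>R v) + f x = \<phi> h - \<phi> 0"
    unfolding \<phi>_def by (simp add: add_ac)
  also have "\<dots> = h^2 * dirderiv (\<lambda>z. dirderiv f z u) (x + s *\<^sub>R u + t *\<^sub>R v) v"
    using e1 e2 by (simp add: power2_eq_square)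
  finally show ?thesis using s t by blast
qed

lemma dist_square_bound:
  fixes x u v :: "'a::real_normed_vector"
  assumes "0 \<le> s" "s \<le> h" "0 \<le> t" "t \<le> h"
  shows "dist (x + s *\<^sub>R u + t *\<^sub>R v) x \<le> h * (norm u + norm v)"
proof -
  have "norm (s *\<^sub>R u + t *\<^sub>R v) \<le> s * norm u + t * norm v"
    using norm_triangle_ineq[of "s *\<^sub>R u" "t *\<^sub>R v"] assms by simp
  also have "\<dots> \<le> h * norm u + h * norm v"
    using assms by (intro add_mono mult_right_mono) auto
  finally have "norm (s *\<^sub>R u + t *\<^sub>R v) \<le> h * (norm u + norm v)" by (simp add: algebra_simps)
  moreover have "dist (x + s *\<^sub>R u + t *\<^sub>R v) x = norm (s *\<^sub>R u + t *\<^sub>R v)"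
    by (metis add.assoc add_diff_cancel_left' dist_norm)
  ultimately show ?thesis by simp
qed

lemma tri_aux: "\<bar>a - b\<bar> < \<bar>b - c\<bar> / 2 \<Longrightarrow> \<bar>a - c\<bar> < \<bar>b - c\<bar> / 2 \<Longrightarrow> False" for a b c :: real
  by (auto simp: abs_real_def split: if_splits)

lemma schwarz:
  fixes f :: "'a::real_normed_vector \<Rightarrow> real"
  assumes S: "open S" "x \<in> S"
    and df: "\<forall>y\<in>S. f differentiable (at y)"
    and du: "\<forall>y\<in>S. (\<lambda>z. dirderiv f z u) differentiable (at y)"
    and dv: "\<forall>y\<in>S. (\<lambda>z. dirderiv f z v) differentiable (at y)"
    and cuv: "continuous (at x) (\<lambda>z. dirderiv (\<lambda>z. dirderiv f z u) z v)"
    and cvu: "continuous (at x) (\<lambda>z. dirderiv (\<lambda>z. dirderiv f z v) z u)"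
  shows "dirderiv (\<lambda>z. dirderiv f z u) x v = dirderiv (\<lambda>z. dirderiv f z v) x u"
proof (rule ccontr)
  define g1 where "g1 = (\<lambda>z. dirderiv (\<lambda>z. dirderiv f z u) z v)"
  define g2 where "g2 = (\<lambda>z. dirderiv (\<lambda>z. dirderiv f z v) z u)"
  assume "dirderiv (\<lambda>z. dirderiv f z u) x v \<noteq> dirderiv (\<lambda>z. dirderiv f z v) x u"
  then have ne: "g1 x \<noteq> g2 x" unfolding g1_def g2_def by simp
  define e where "e = \<bar>g1 x - g2 x\<bar> / 2"
  have e: "e > 0" using ne unfolding e_def by simp
  obtain d1 where d1: "d1 > 0" "\<And>y. dist y x < d1 \<Longrightarrow> dist (g1 y) (g1 x) < e"
    using cuv e unfolding continuous_at_eps_delta g1_def by blast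
  obtain d2 where d2: "d2 > 0" "\<And>y. dist y x < d2 \<Longrightarrow> dist (g2 y) (g2 x) < e"
    using cvu e unfolding continuous_at_eps_delta g2_def by blast
  obtain r where r: "r > 0" "ball x r \<subseteq> S" using S open_contains_ball by blast
  define m where "m = min r (min d1 d2)"
  have m: "m > 0" "m \<le> r" "m \<le> d1" "m \<le> d2" using r d1 d2 unfolding m_def by auto
  define K where "K = norm u + norm v + 1"
  have K: "K > 0" "norm u + norm v < K" unfolding K_def by (auto intro: add_nonneg_pos)
  define h where "h = m / (2 * K)"
  have h: "h > 0" using m K unfolding h_def by simp
  have hK: "h * K < m" using m K unfolding h_def by (simp add: field_simps)
  have hm: "h * (norm u + norm v) < m"
    using mult_strict_left_mono[OF K(2) h] hK by linarith
  have hm2: "h * (norm v + norm u) < m" using hm by (simp add: add.commute)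
  obtain s1 t1 where st1: "0 < s1" "s1 < h" "0 < t1" "t1 < h" and eq1:
    "f (x + h *\<^sub>R u + h *\<^sub>R v) - f (x + h *\<^sub>R u) - f (x + h *\<^sub>R v) + f x
       = h^2 * g1 (x + s1 *\<^sub>R u + t1 *\<^sub>R v)"
    using mvt_square[of x r f u h v] df du r hm m h unfolding g1_def by force
  obtain s2 t2 where st2: "0 < s2" "s2 < h" "0 < t2" "t2 < h" and eq2:
    "f (x + h *\<^sub>R v + h *\<^sub>R u) - f (x + h *\<^sub>R v) - f (x + h *\<^sub>R u) + f x
       = h^2 * g2 (x + s2 *\<^sub>R v + t2 *\<^sub>R u)"
    using mvt_square[of x r f v h u] df dv r hm2 m h unfolding g2_def by force
  have comm: "x + h *\<^sub>R v + h *\<^sub>R u = x + h *\<^sub>R u + h *\<^sub>R v" by (simp add: add_ac)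
  have "h^2 * g1 (x + s1 *\<^sub>R u + t1 *\<^sub>R v) = h^2 * g2 (x + s2 *\<^sub>R v + t2 *\<^sub>R u)"
    using eq1 eq2[unfolded comm] by linarith
  then have geq: "g1 (x + s1 *\<^sub>R u + t1 *\<^sub>R v) = g2 (x + s2 *\<^sub>R v + t2 *\<^sub>R u)"
    using h by simp
  have "dist (x + s1 *\<^sub>R u + t1 *\<^sub>R v) x < d1"
    using dist_square_bound[of s1 h t1 x u v] st1 hm m by linarith
  then have c1: "\<bar>g1 (x + s1 *\<^sub>R u + t1 *\<^sub>R v) - g1 x\<bar> < e" using d1 by (simp add: dist_real_def)
  have "dist (x + s2 *\<^sub>R v + t2 *\<^sub>R u) x < d2"
    using dist_square_bound[of s2 h t2 x v u] st2 hm2 m by linarith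
  then have c2: "\<bar>g2 (x + s2 *\<^sub>R v + t2 *\<^sub>R u) - g2 x\<bar> < e" using d2 by (simp add: dist_real_def)
  show False using tri_aux[of "g1 (x + s1 *\<^sub>R u + t1 *\<^sub>R v)" "g1 x" "g2 x"] c1 c2 geq unfolding e_def by simp
qed

lemma sigma_det: "sigma P \<mu> = det ((\<chi> j i. P$i$(\<mu> j)) :: real^'d^'d)"
  for P :: "real^'D::finite^'d::finite"
proof -
  have "sigma P \<mu> = (\<Sum>a\<in>UNIV. if a permutes (UNIV::'d set) then of_int (sign a) * (\<Prod>j\<in>UNIV. P $ (a j) $ (\<mu> j)) else 0)"
    unfolding sigma_def levi_civita_def by (intro sum.cong) auto
  also have "\<dots> = (\<Sum>a\<in>{p. p permutes (UNIV::'d set)}. of_int (sign a) * (\<Prod>j\<in>UNIV. P $ (a j) $ (\<mu> j)))"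
    by (subst sum.inter_filter[symmetric]) auto
  finally show ?thesis unfolding det_def by simp
qed

lemma sigma_rowop:
  fixes Q :: "real^'D::finite^'d::finite"
  shows "sigma (\<chi> i. if i = a then Q$i + t *\<^sub>R Q$b else Q$i) \<mu> = (if a = b then 1 + t else 1) * sigma Q \<mu>"
proof -
  define R where "R = ((\<chi> i j. Q$i$(\<mu> j)) :: real^'d^'d)"
  have tr: "sigma Q' \<mu> = det ((\<chi> i j. Q'$i$(\<mu> j)) :: real^'d^'d)" for Q' :: "real^'D^'d"
  proof -
    have "(\<chi> j i. Q'$i$(\<mu> j)) = transpose ((\<chi> i j. Q'$i$(\<mu> j)) :: real^'d^'d)"
      by (simp add: transpose_def)
    then show ?thesis by (simp add: sigma_det)
  qed
  have eq: "((\<chi> i j. (\<chi> i. if i = a then Q$i + t *\<^sub>R Q$b else Q$i)$i$(\<mu> j)) :: real^'d^'d)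
        = (\<chi> k. if k = a then row a R + t *s row b R else row k R)"
    by (simp add: vec_eq_iff R_def row_def)
  show ?thesis
  proof (cases "a = b")
    case True
    have "(\<chi> k. if k = a then row a R + t *s row b R else row k R) = (\<chi> k. if k = a then (1 + t) *s row k R else row k R)"
      using True by (simp add: vec_eq_iff algebra_simps)
    moreover have "det (\<chi> k. if k = a then (1 + t) *s row k R else row k R) = (1 + t) * det (\<chi> k. row k R)"
      using det_row_mul[of a "1 + t" "\<lambda>k. row k R" "\<lambda>k. row k R"] by simp
    moreover have "(\<chi> k. row k R) = R" by (simp add: vec_eq_iff row_def)
    ultimately show ?thesis using True tr[of Q] unfolding tr eq R_def by simp
  next
    case False
    show ?thesis using det_row_operation[OF False, where A=R and c=t] False tr[of Q] unfolding tr eq R_def by simp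
  qed
qed

definition dsig :: "real^'D::finite^'d::finite \<Rightarrow> ('d \<Rightarrow> 'D) \<Rightarrow> real^'D^'d \<Rightarrow> real" where
  "dsig Q \<mu> W = (\<Sum>a\<in>UNIV. levi_civita a * (\<Sum>j\<in>UNIV. W$(a j)$(\<mu> j) * (\<Prod>k\<in>UNIV - {j}. Q$(a k)$(\<mu> k))))"

lemma has_derivative_entry: "((\<lambda>Q. Q$i$k) has_derivative (\<lambda>W. W$i$k)) F"
  for Q :: "real^'D::finite^'d::finite"
  by (rule bounded_linear_imp_has_derivative)
     (rule bounded_linear_compose[OF bounded_linear_vec_nth bounded_linear_vec_nth])

lemma sigma_has_derivative: "((\<lambda>Q. sigma Q \<mu>) has_derivative dsig Q \<mu>) (at Q within S)"
  unfolding sigma_def[abs_def] dsig_def[abs_def]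
  by (intro has_derivative_sum has_derivative_mult_right has_derivative_prod has_derivative_entry)

lemma differentiable_prod':
  fixes f :: "'i \<Rightarrow> 'a::real_normed_vector \<Rightarrow> real"
  assumes "\<And>i. i \<in> I \<Longrightarrow> f i differentiable (at x within S)"
  shows "(\<lambda>x. \<Prod>i\<in>I. f i x) differentiable (at x within S)"
proof -
  obtain f' where "\<And>i. i \<in> I \<Longrightarrow> (f i has_derivative f' i) (at x within S)"
    using assms unfolding differentiable_def by metis
  then show ?thesis unfolding differentiable_def by (blast intro: has_derivative_prod)
qed

lemma dsig_differentiable: "(\<lambda>Q. dsig Q \<mu> W) differentiable (at Q within S)"
  unfolding dsig_def
  by (intro differentiable_sum differentiable_mult differentiable_const differentiable_prod' ballI
      has_derivative_entry[THEN differentiableI] finite)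

lemma dsig_linear: "linear (dsig Q \<mu>)"
  using sigma_has_derivative[of \<mu> Q UNIV] has_derivative_linear by blast

lemma dsig_rowop:
  fixes Q :: "real^'D::finite^'d::finite"
  shows "dsig Q \<mu> (\<chi> i. if i = a then Q$b else 0) = (if a = b then sigma Q \<mu> else 0)"
proof -
  define W where "W = ((\<chi> i. if i = a then Q$b else 0) :: real^'D^'d)"
  have d1: "((\<lambda>t. sigma (Q + t *\<^sub>R W) \<mu>) has_real_derivative dsig Q \<mu> W) (at 0)"
    using line_deriv[of "\<lambda>Q. sigma Q \<mu>" "dsig Q \<mu>" Q 0 W] sigma_has_derivative[of \<mu> Q UNIV] by simp
  have eqf: "(\<lambda>t. sigma (Q + t *\<^sub>R W) \<mu>) = (\<lambda>t. (if a = b then 1 + t else 1) * sigma Q \<mu>)"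
  proof
    fix t
    have "Q + t *\<^sub>R W = (\<chi> i. if i = a then Q$i + t *\<^sub>R Q$b else Q$i)"
      by (simp add: vec_eq_iff W_def)
    then show "sigma (Q + t *\<^sub>R W) \<mu> = (if a = b then 1 + t else 1) * sigma Q \<mu>"
      by (simp add: sigma_rowop)
  qed
  have d2: "((\<lambda>t. (if a = b then 1 + t else 1) * sigma Q \<mu>) has_real_derivative (if a = b then sigma Q \<mu> else 0)) (at 0)"
    by (cases "a = b") (auto intro!: derivative_eq_intros)
  show ?thesis using DERIV_unique[OF d1[unfolded eqf] d2] unfolding W_def .
qed

lemma if_vec_nth: "(if c then x else y) $ k = (if c then x $ k else y $ k)"
  by simp

lemma mult_if0: "(a::real) * (if c then b else 0) = (if c then a * b else 0)"
  by simp

lemma sum_if_const0: "(\<Sum>x\<in>A. if c then f x else 0) = (if c then (\<Sum>x\<in>A. f x) else 0)"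
  by simp

lemma matrix_expand:
  fixes W :: "real^'D::finite^'d::finite"
  shows "W = (\<Sum>a\<in>UNIV. \<Sum>\<alpha>\<in>UNIV. W$a$\<alpha> *\<^sub>R axis a (axis \<alpha> 1))"
  by (simp add: vec_eq_iff axis_def if_vec_nth mult_if0 sum_if_const0 sum.delta sum.delta' cong: if_cong)

lemma lin_expand2:
  fixes W :: "real^'D::finite^'d::finite"
  assumes "linear L"
  shows "L W = (\<Sum>a\<in>UNIV. \<Sum>\<alpha>\<in>UNIV. W$a$\<alpha> * L (axis a (axis \<alpha> 1)))"
proof -
  have "L W = L (\<Sum>a\<in>UNIV. \<Sum>\<alpha>\<in>UNIV. W$a$\<alpha> *\<^sub>R axis a (axis \<alpha> 1))"
    using matrix_expand[of W] by simp
  also have "\<dots> = (\<Sum>a\<in>UNIV. \<Sum>\<alpha>\<in>UNIV. W$a$\<alpha> * L (axis a (axis \<alpha> 1)))"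
    using assms by (simp add: linear_sum linear_scale)
  finally show ?thesis .
qed

lemma lin_expand1:
  fixes w :: "real^'n::finite"
  assumes "linear L"
  shows "L w = (\<Sum>\<alpha>\<in>UNIV. w$\<alpha> * L (axis \<alpha> 1))"
proof -
  have "L w = L (\<Sum>c\<in>UNIV. (w$c) *\<^sub>R axis c 1)"
    using basis_expansion[of w] by (simp add: scalar_mult_eq_scaleR)
  also have "\<dots> = (\<Sum>c\<in>UNIV. w$c * L (axis c 1))"
    using assms by (simp add: linear_sum linear_scale)
  finally show ?thesis .
qed

lemma row_expand:
  fixes Q :: "real^'D::finite^'d::finite"
  shows "(\<Sum>\<alpha>\<in>UNIV. Q$b$\<alpha> *\<^sub>R axis a (axis \<alpha> 1)) = (\<chi> i. if i = a then Q$b else 0)"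
  by (simp add: vec_eq_iff axis_def if_vec_nth mult_if0 sum_if_const0 sum.delta sum.delta' cong: if_cong)

definition gQ :: "(real^'D \<Rightarrow> ('d \<Rightarrow> 'D) \<Rightarrow> ('d \<Rightarrow> 'D) \<Rightarrow> real) \<Rightarrow> real^'D::finite \<Rightarrow> real^'D^'d::finite \<Rightarrow> real^'D^'d \<Rightarrow> real" where
  "gQ V y Q W = (\<Sum>\<mu>\<in>UNIV. \<Sum>\<nu>\<in>UNIV. V y \<mu> \<nu> * (dsig Q \<mu> W * sigma Q \<nu> + sigma Q \<mu> * dsig Q \<nu> W))"

definition gY :: "(real^'D \<Rightarrow> ('d \<Rightarrow> 'D) \<Rightarrow> ('d \<Rightarrow> 'D) \<Rightarrow> real) \<Rightarrow> real^'D::finite \<Rightarrow> real^'D^'d::finite \<Rightarrow> real^'D \<Rightarrow> real" where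
  "gY V y Q w = (\<Sum>\<mu>\<in>UNIV. \<Sum>\<nu>\<in>UNIV. (\<Sum>\<alpha>\<in>UNIV. w$\<alpha> * dirderiv (\<lambda>y. V y \<mu> \<nu>) y (axis \<alpha> 1)) * sigma Q \<mu> * sigma Q \<nu>)"

lemma gamma_dQ: "((\<lambda>Q. gamma_v V y Q) has_derivative gQ V y Q) (at Q within S)"
  unfolding gamma_v_def[abs_def] gQ_def[abs_def]
  by (rule derivative_eq_intros sigma_has_derivative refl | simp)+ (simp add: algebra_simps)

lemma gamma_chain:
  assumes dx: "(x has_derivative x') (at \<xi>)" and dq: "(q has_derivative q') (at \<xi>)"
    and dV: "\<And>\<mu> \<nu>. (\<lambda>y. V y \<mu> \<nu>) differentiable (at (x \<xi>))"
  shows "((\<lambda>\<eta>. gamma_v V (x \<eta>) (q \<eta>)) has_derivative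
     (\<lambda>v. gY V (x \<xi>) (q \<xi>) (x' v) + gQ V (x \<xi>) (q \<xi>) (q' v))) (at \<xi>)"
proof -
  have hV: "((\<lambda>\<eta>. V (x \<eta>) \<mu> \<nu>) has_derivative
      (\<lambda>v. \<Sum>\<alpha>\<in>UNIV. x' v $ \<alpha> * dirderiv (\<lambda>y. V y \<mu> \<nu>) (x \<xi>) (axis \<alpha> 1))) (at \<xi>)" for \<mu> \<nu>
    using has_derivative_compose[OF dx diff_expand[OF dV[of \<mu> \<nu>]]] by simp
  have hs: "((\<lambda>\<eta>. sigma (q \<eta>) \<mu>) has_derivative (\<lambda>v. dsig (q \<xi>) \<mu> (q' v))) (at \<xi>)" for \<mu>
    using has_derivative_compose[OF dq sigma_has_derivative[of \<mu> "q \<xi>" UNIV]] by simp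
  have "((\<lambda>\<eta>. \<Sum>\<mu>\<in>UNIV. \<Sum>\<nu>\<in>UNIV. V (x \<eta>) \<mu> \<nu> * sigma (q \<eta>) \<mu> * sigma (q \<eta>) \<nu>) has_derivative
     (\<lambda>v. \<Sum>\<mu>\<in>UNIV. \<Sum>\<nu>\<in>UNIV.
        (V (x \<xi>) \<mu> \<nu> * sigma (q \<xi>) \<mu>) * dsig (q \<xi>) \<nu> (q' v) +
        ((V (x \<xi>) \<mu> \<nu>) * dsig (q \<xi>) \<mu> (q' v) +
         (\<Sum>\<alpha>\<in>UNIV. x' v $ \<alpha> * dirderiv (\<lambda>y. V y \<mu> \<nu>) (x \<xi>) (axis \<alpha> 1)) * sigma (q \<xi>) \<mu>) * sigma (q \<xi>) \<nu>)) (at \<xi>)"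
    by (intro has_derivative_sum has_derivative_mult hV hs)
  then show ?thesis
    unfolding gamma_v_def gY_def gQ_def
    by (rule has_derivative_eq_rhs)
       (simp add: fun_eq_iff sum.distrib[symmetric] algebra_simps)
qed

lemma gamma_dy:
  assumes dV: "\<And>\<mu> \<nu>. (\<lambda>y. V y \<mu> \<nu>) differentiable (at y)"
  shows "((\<lambda>y. gamma_v V y Q) has_derivative gY V y Q) (at y)"
proof -
  have hV: "((\<lambda>y. V y \<mu> \<nu>) has_derivative
      (\<lambda>v. \<Sum>\<alpha>\<in>UNIV. v $ \<alpha> * dirderiv (\<lambda>y. V y \<mu> \<nu>) y (axis \<alpha> 1))) (at y)" for \<mu> \<nu>
    using diff_expand[OF dV[of \<mu> \<nu>]] by simp
  show ?thesis
    unfolding gamma_v_def[abs_def] gY_def[abs_def]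
    by (rule derivative_eq_intros hV refl | simp)+
qed

lemma gQ_linear: "linear (gQ V y Q)"
  using gamma_dQ[of V y Q UNIV] has_derivative_linear by blast

lemma has_derivative_vec_nth': "((\<lambda>x. x $ i) has_derivative (\<lambda>x. x $ i)) F"
  by (rule bounded_linear_imp_has_derivative[OF bounded_linear_vec_nth])

lemma gY_linear: "linear (gY V y Q)"
proof -
  have "((gY V y Q) has_derivative (gY V y Q)) (at 0)"
    unfolding gY_def[abs_def]
    by (rule derivative_eq_intros refl has_derivative_vec_nth' | simp)+
  then show ?thesis using has_derivative_linear by blast
qed

lemma gQ_row:
  fixes Q :: "real^'D::finite^'d::finite"
  shows "(\<Sum>\<alpha>\<in>UNIV. Q$b$\<alpha> * gQ V y Q (axis a (axis \<alpha> 1))) = (if a = b then 2 * gamma_v V y Q else 0)"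
proof -
  have "(\<Sum>\<alpha>\<in>UNIV. Q$b$\<alpha> * gQ V y Q (axis a (axis \<alpha> 1))) = gQ V y Q (\<Sum>\<alpha>\<in>UNIV. Q$b$\<alpha> *\<^sub>R axis a (axis \<alpha> 1))"
    using gQ_linear[of V y Q] by (simp add: linear_sum linear_scale)
  also have "\<dots> = gQ V y Q (\<chi> i. if i = a then Q$b else 0)" by (simp add: row_expand)
  also have "\<dots> = (if a = b then 2 * gamma_v V y Q else 0)"
    unfolding gQ_def gamma_v_def dsig_rowop
    by (auto simp: sum_distrib_left algebra_simps intro!: sum.cong)
  finally show ?thesis .
qed

lemma dd_cong:
  fixes f g :: "'a::real_normed_vector \<Rightarrow> real"
  assumes "open S" "x \<in> S" "\<And>y. y \<in> S \<Longrightarrow> f y = g y"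
  shows "dirderiv f x v = dirderiv g x v"
proof -
  have o: "open ((\<lambda>t::real. x + t *\<^sub>R v) -` S)"
    by (rule continuous_open_vimage) (auto intro!: continuous_intros assms(1))
  have "0 \<in> (\<lambda>t::real. x + t *\<^sub>R v) -` S" using assms(2) by simp
  then have "eventually (\<lambda>t. t \<in> (\<lambda>t::real. x + t *\<^sub>R v) -` S) (nhds 0)"
    using o eventually_nhds_in_open by blast
  then have "eventually (\<lambda>t. f (x + t *\<^sub>R v) = g (x + t *\<^sub>R v)) (nhds 0)"
    by eventually_elim (use assms(3) in auto)
  then show ?thesis unfolding dirderiv_def by (rule deriv_cong_ev) simp
qed

lemma dd_diff_eq:
  fixes f :: "'a::real_normed_vector \<Rightarrow> real"
  assumes "f differentiable (at x)"
  shows "dirderiv f x v = frechet_derivative f (at x) v"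
  using dirderiv_eq assms frechet_derivative_works by blast

lemma dd_mult:
  fixes f g :: "'a::real_normed_vector \<Rightarrow> real"
  assumes "f differentiable (at x)" "g differentiable (at x)"
  shows "dirderiv (\<lambda>y. f y * g y) x v = f x * dirderiv g x v + dirderiv f x v * g x"
proof -
  obtain f' g' where f: "(f has_derivative f') (at x)" and g: "(g has_derivative g') (at x)"
    using assms unfolding differentiable_def by blast
  have "((\<lambda>y. f y * g y) has_derivative (\<lambda>h. f x * g' h + f' h * g x)) (at x)"
    using has_derivative_mult[OF f g] .
  from dirderiv_eq[OF this] dirderiv_eq[OF f] dirderiv_eq[OF g] show ?thesis by simp
qed

lemma dd_sum:
  fixes f :: "'i \<Rightarrow> 'a::real_normed_vector \<Rightarrow> real"
  assumes "finite I" "\<And>i. i \<in> I \<Longrightarrow> f i differentiable (at x)"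
  shows "dirderiv (\<lambda>y. \<Sum>i\<in>I. f i y) x v = (\<Sum>i\<in>I. dirderiv (f i) x v)"
proof -
  have "\<forall>i\<in>I. (f i has_derivative frechet_derivative (f i) (at x)) (at x)"
    using assms(2) frechet_derivative_works by blast
  then have "((\<lambda>y. \<Sum>i\<in>I. f i y) has_derivative (\<lambda>h. \<Sum>i\<in>I. frechet_derivative (f i) (at x) h)) (at x)"
    by (intro has_derivative_sum) auto
  moreover have "(\<Sum>i\<in>I. frechet_derivative (f i) (at x) v) = (\<Sum>i\<in>I. dirderiv (f i) x v)"
    using dd_diff_eq[OF assms(2)] by (intro sum.cong) auto
  ultimately show ?thesis using dirderiv_eq by metis
qed

lemma dd_const: "dirderiv (\<lambda>y. c) x v = 0"
  using dirderiv_eq[of "\<lambda>y. c" "\<lambda>h. 0" x v] by simp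

lemma has_derivative_vecI':
  fixes f :: "'a::real_normed_vector \<Rightarrow> 'b::euclidean_space^'n::finite"
  assumes "\<And>i. ((\<lambda>x. f x $ i) has_derivative (\<lambda>h. f' h $ i)) (at x)"
  shows "(f has_derivative f') (at x)"
proof (subst has_derivative_componentwise_within, intro ballI)
  fix b :: "'b^'n" assume "b \<in> Basis"
  then obtain i u where b: "b = axis i u" and "u \<in> Basis" unfolding Basis_vec_def by auto
  show "((\<lambda>x. f x \<bullet> b) has_derivative (\<lambda>x. f' x \<bullet> b)) (at x)"
    unfolding b inner_axis using has_derivative_inner_left[OF assms[of i], of u] by simp
qed

lemma has_derivative_mat:
  fixes f :: "'a::real_normed_vector \<Rightarrow> real^'m::finite^'n::finite"
  assumes "\<And>i j. ((\<lambda>x. f x $ i $ j) has_derivative (\<lambda>h. f' h $ i $ j)) (at x)"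
  shows "(f has_derivative f') (at x)"
  by (intro has_derivative_vecI' has_derivative_vecI assms)

lemma axis_sum_nth: "(\<Sum>c\<in>UNIV. axis b (1::real) $ c * t c) = t b"
  by (simp add: axis_def if_distrib[where f="\<lambda>x. x * _"] cong: if_cong)

lemma noether:
  fixes \<Sigma> :: "(real^'d::finite) set"
    and M :: "(real^'D::finite) set"
    and V :: "real^'D \<Rightarrow> ('d \<Rightarrow> 'D) \<Rightarrow> ('d \<Rightarrow> 'D) \<Rightarrow> real"
    and X :: "real^'d \<Rightarrow> real^'D"
    and F F' F'' :: "real \<Rightarrow> real"
  assumes open_Sigma: "open \<Sigma>" and xi: "\<xi> \<in> \<Sigma>"
    and vdiff: "\<And>y \<mu> \<nu>. y \<in> M \<Longrightarrow> (\<lambda>y. V y \<mu> \<nu>) differentiable (at y)"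
    and F_deriv: "\<forall>s>0. (F has_real_derivative F' s) (at s)"
    and F'_deriv: "\<forall>s>0. (F' has_real_derivative F'' s) (at s)"
    and X_smooth: "\<forall>\<mu>. smooth_on \<Sigma> (\<lambda>\<xi>. X \<xi> $ \<mu>)"
    and X_into: "\<forall>\<xi>\<in>\<Sigma>. X \<xi> \<in> M"
    and gamma_pos: "\<forall>\<xi>\<in>\<Sigma>. gamma_v V (X \<xi>) (jac X \<xi>) > 0"
    and EL_F: "euler_lagrange (\<lambda>x P. F (gamma_v V x P)) \<Sigma> X"
  defines "g \<equiv> (\<lambda>\<eta>. gamma_v V (X \<eta>) (jac X \<eta>))"
  shows "(F' (g \<xi>) + 2 * g \<xi> * F'' (g \<xi>)) * dirderiv g \<xi> (axis b 1) = 0"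
proof -
  define P where "P = jac X"
  have Pc: "P \<eta> $ a $ \<mu> = dirderiv (\<lambda>\<eta>. X \<eta> $ \<mu>) \<eta> (axis a 1)" for \<eta> a \<mu>
    unfolding P_def jac_def by simp
  have sm: "iter_partial is (\<lambda>\<eta>. X \<eta> $ \<mu>) differentiable (at \<eta>)" if "\<eta> \<in> \<Sigma>" for "is" \<mu> \<eta>
    using X_smooth that unfolding smooth_on_def by blast
  have Pfun: "(\<lambda>\<eta>. P \<eta> $ a $ \<mu>) = iter_partial [a] (\<lambda>\<eta>. X \<eta> $ \<mu>)" for a \<mu>
    by (simp add: Pc fun_eq_iff)
  have dX: "(\<lambda>\<eta>. X \<eta> $ \<mu>) differentiable (at \<eta>)" if "\<eta> \<in> \<Sigma>" for \<mu> \<eta>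
    using sm[OF that, of "[]" \<mu>] by simp
  have dP: "(\<lambda>\<eta>. P \<eta> $ a $ \<mu>) differentiable (at \<eta>)" if "\<eta> \<in> \<Sigma>" for a \<mu> \<eta>
    using sm[OF that, of "[a]" \<mu>] Pfun by simp
  define P2 where "P2 c a \<mu> = dirderiv (\<lambda>\<eta>. P \<eta> $ a $ \<mu>) \<xi> (axis c 1)" for c a \<mu>
  have schw: "P2 c a \<mu> = P2 a c \<mu>" for a c \<mu>
  proof -
    have e2: "(\<lambda>z. dirderiv (\<lambda>z. dirderiv (\<lambda>\<eta>. X \<eta> $ \<mu>) z u) z v) = iter_partial [v', u'] (\<lambda>\<eta>. X \<eta> $ \<mu>)"
      if "u = axis u' 1" "v = axis v' 1" for u v u' v'
      using that by (simp add: fun_eq_iff)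
    have e1: "(\<lambda>z. dirderiv (\<lambda>\<eta>. X \<eta> $ \<mu>) z u) = iter_partial [u'] (\<lambda>\<eta>. X \<eta> $ \<mu>)"
      if "u = axis u' 1" for u u'
      using that by (simp add: fun_eq_iff)
    have "dirderiv (\<lambda>z. dirderiv (\<lambda>\<eta>. X \<eta> $ \<mu>) z (axis a 1)) \<xi> (axis c 1) =
          dirderiv (\<lambda>z. dirderiv (\<lambda>\<eta>. X \<eta> $ \<mu>) z (axis c 1)) \<xi> (axis a 1)"
    proof (rule schwarz[OF open_Sigma xi])
      show "\<forall>y\<in>\<Sigma>. (\<lambda>\<eta>. X \<eta> $ \<mu>) differentiable at y" using dX by blast
      show "\<forall>y\<in>\<Sigma>. (\<lambda>z. dirderiv (\<lambda>\<eta>. X \<eta> $ \<mu>) z (axis a 1)) differentiable at y"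
        using sm e1[OF refl] by metis
      show "\<forall>y\<in>\<Sigma>. (\<lambda>z. dirderiv (\<lambda>\<eta>. X \<eta> $ \<mu>) z (axis c 1)) differentiable at y"
        using sm e1[OF refl] by metis
      show "continuous (at \<xi>) (\<lambda>z. dirderiv (\<lambda>z. dirderiv (\<lambda>\<eta>. X \<eta> $ \<mu>) z (axis a 1)) z (axis c 1))"
        unfolding e2[OF refl refl] using sm[OF xi] differentiable_imp_continuous_within by blast
      show "continuous (at \<xi>) (\<lambda>z. dirderiv (\<lambda>z. dirderiv (\<lambda>\<eta>. X \<eta> $ \<mu>) z (axis c 1)) z (axis a 1))"
        unfolding e2[OF refl refl] using sm[OF xi] differentiable_imp_continuous_within by blast
    qed
    then show ?thesis unfolding P2_def Pc by simp
  qed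
  have xM: "X \<xi> \<in> M" using X_into xi by blast
  have dVx: "(\<lambda>y. V y \<mu> \<nu>) differentiable (at (X \<xi>))" for \<mu> \<nu> using vdiff xM by blast
  define DX where "DX v = (\<chi> \<mu>. \<Sum>c\<in>UNIV. v$c * P \<xi> $ c $ \<mu>)" for v
  have hX: "(X has_derivative DX) (at \<xi>)"
    unfolding DX_def[abs_def]
    by (rule has_derivative_vecI) (use diff_expand[OF dX[OF xi]] in \<open>simp add: Pc\<close>)
  define DP where "DP v = (\<chi> a \<mu>. \<Sum>c\<in>UNIV. v$c * P2 c a \<mu>)" for v
  have hP: "(P has_derivative DP) (at \<xi>)"
    unfolding DP_def[abs_def]
    by (rule has_derivative_mat) (use diff_expand[OF dP[OF xi]] in \<open>simp add: P2_def\<close>)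
  have hg: "(g has_derivative (\<lambda>v. gY V (X \<xi>) (P \<xi>) (DX v) + gQ V (X \<xi>) (P \<xi>) (DP v))) (at \<xi>)"
    unfolding g_def P_def[symmetric] by (rule gamma_chain[OF hX hP dVx])
  define gb where "gb = dirderiv g \<xi> (axis b 1)"
  have DXb: "DX (axis b 1) = P \<xi> $ b" by (simp add: DX_def vec_eq_iff axis_sum_nth)
  have DPb: "DP (axis b 1) = (\<chi> a \<mu>. P2 b a \<mu>)" by (simp add: DP_def vec_eq_iff axis_sum_nth)
  have gb: "gb = gY V (X \<xi>) (P \<xi>) (P \<xi> $ b) + gQ V (X \<xi>) (P \<xi>) (\<chi> a \<mu>. P2 b a \<mu>)"
    using dirderiv_eq[OF hg, of "axis b 1"] DXb DPb gb_def by simp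
  define K where "K a \<alpha> \<eta> = gQ V (X \<eta>) (P \<eta>) (axis a (axis \<alpha> 1))" for a \<alpha> \<eta>
  have gb2: "gb = gY V (X \<xi>) (P \<xi>) (P \<xi> $ b) + (\<Sum>a\<in>UNIV. \<Sum>\<alpha>\<in>UNIV. P2 a b \<alpha> * K a \<alpha> \<xi>)"
    using gb lin_expand2[OF gQ_linear, where W="\<chi> a \<mu>. P2 b a \<mu>"] schw unfolding K_def by simp
  have gpos: "g \<eta> > 0" if "\<eta> \<in> \<Sigma>" for \<eta> using gamma_pos that unfolding g_def by blast
  have hF: "(F has_derivative (\<lambda>z. F' s * z)) (at s)" if "s > 0" for s
    using F_deriv that has_field_derivative_imp_has_derivative by blast
  have hF': "(F' has_derivative (\<lambda>z. F'' s * z)) (at s)" if "s > 0" for s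
    using F'_deriv that has_field_derivative_imp_has_derivative by blast
  have T1: "dirderiv (\<lambda>y. F (gamma_v V y (P \<xi>))) (X \<xi>) (axis \<alpha> 1) = F' (g \<xi>) * gY V (X \<xi>) (P \<xi>) (axis \<alpha> 1)" for \<alpha>
  proof -
    have "((\<lambda>y. F (gamma_v V y (P \<xi>))) has_derivative (\<lambda>w. F' (g \<xi>) * gY V (X \<xi>) (P \<xi>) w)) (at (X \<xi>))"
      using has_derivative_compose[OF gamma_dy[OF dVx, where Q="P \<xi>"] hF[of "gamma_v V (X \<xi>) (P \<xi>)"]]
        gpos[OF xi] unfolding g_def P_def by simp
    from dirderiv_eq[OF this] show ?thesis .
  qed
  have T2: "dirderiv (\<lambda>Q. F (gamma_v V (X \<eta>) Q)) (P \<eta>) (axis a (axis \<alpha> 1)) = F' (g \<eta>) * K a \<alpha> \<eta>"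
    if "\<eta> \<in> \<Sigma>" for a \<alpha> \<eta>
  proof -
    have "((\<lambda>Q. F (gamma_v V (X \<eta>) Q)) has_derivative (\<lambda>W. F' (g \<eta>) * gQ V (X \<eta>) (P \<eta>) W)) (at (P \<eta>))"
      using has_derivative_compose[OF gamma_dQ[where S=UNIV and Q="P \<eta>"] hF[of "gamma_v V (X \<eta>) (P \<eta>)"]]
        gpos[OF that] unfolding g_def P_def by simp
    from dirderiv_eq[OF this] show ?thesis unfolding K_def .
  qed
  have dXv: "X differentiable (at \<xi>)" using hX differentiableI by blast
  have dPv: "P differentiable (at \<xi>)" using hP differentiableI by blast
  have dVX: "(\<lambda>\<eta>. V (X \<eta>) \<mu> \<nu>) differentiable (at \<xi>)" for \<mu> \<nu>
    using differentiable_compose[OF dVx dXv] .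
  have dsP: "(\<lambda>\<eta>. dsig (P \<eta>) \<mu> W) differentiable (at \<xi>)" for \<mu> W
    using differentiable_compose[OF dsig_differentiable dPv] .
  have sP: "(\<lambda>\<eta>. sigma (P \<eta>) \<mu>) differentiable (at \<xi>)" for \<mu>
    using differentiable_compose[OF sigma_has_derivative[THEN differentiableI] dPv] .
  have dK: "K a \<alpha> differentiable (at \<xi>)" for a \<alpha>
    unfolding K_def[abs_def] gQ_def
    by (intro differentiable_sum differentiable_mult differentiable_add dVX dsP sP finite ballI)
  have hFg: "((\<lambda>\<eta>. F' (g \<eta>)) has_derivative (\<lambda>v. F'' (g \<xi>) * (gY V (X \<xi>) (P \<xi>) (DX v) + gQ V (X \<xi>) (P \<xi>) (DP v)))) (at \<xi>)"
    using has_derivative_compose[OF hg hF'[OF gpos[OF xi]]] .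
  have dFg: "(\<lambda>\<eta>. F' (g \<eta>)) differentiable (at \<xi>)" using hFg differentiableI by blast
  define Dd where "Dd a \<alpha> = dirderiv (\<lambda>\<eta>. F' (g \<eta>) * K a \<alpha> \<eta>) \<xi> (axis a 1)" for a \<alpha>
  have ELx: "F' (g \<xi>) * gY V (X \<xi>) (P \<xi>) (axis \<alpha> 1) = (\<Sum>a\<in>UNIV. Dd a \<alpha>)" for \<alpha>
  proof -
    have "dirderiv (\<lambda>y. F (gamma_v V y (P \<xi>))) (X \<xi>) (axis \<alpha> 1) -
      (\<Sum>a\<in>UNIV. dirderiv (\<lambda>\<eta>. dirderiv (\<lambda>Q. F (gamma_v V (X \<eta>) Q)) (P \<eta>) (axis a (axis \<alpha> 1))) \<xi> (axis a 1)) = 0"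
      using EL_F xi unfolding euler_lagrange_def P_def by blast
    moreover have "dirderiv (\<lambda>\<eta>. dirderiv (\<lambda>Q. F (gamma_v V (X \<eta>) Q)) (P \<eta>) (axis a (axis \<alpha> 1))) \<xi> (axis a 1) = Dd a \<alpha>" for a
      unfolding Dd_def by (rule dd_cong[OF open_Sigma xi]) (simp add: T2)
    ultimately show ?thesis using T1 by simp
  qed
  have prod: "dirderiv (\<lambda>\<eta>. P \<eta> $ b $ \<alpha> * (F' (g \<eta>) * K a \<alpha> \<eta>)) \<xi> (axis a 1)
      = P \<xi> $ b $ \<alpha> * Dd a \<alpha> + P2 a b \<alpha> * (F' (g \<xi>) * K a \<alpha> \<xi>)" for a \<alpha>
    unfolding Dd_def P2_def by (rule dd_mult[OF dP[OF xi] differentiable_mult[OF dFg dK]])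
  have sumA: "dirderiv (\<lambda>\<eta>. \<Sum>\<alpha>\<in>UNIV. P \<eta> $ b $ \<alpha> * (F' (g \<eta>) * K a \<alpha> \<eta>)) \<xi> (axis a 1)
      = (\<Sum>\<alpha>\<in>UNIV. P \<xi> $ b $ \<alpha> * Dd a \<alpha> + P2 a b \<alpha> * (F' (g \<xi>) * K a \<alpha> \<xi>))" for a
    by (subst dd_sum) (auto simp: prod intro!: differentiable_mult dP[OF xi] dFg dK)
  have rowid: "(\<Sum>\<alpha>\<in>UNIV. P \<eta> $ b $ \<alpha> * (F' (g \<eta>) * K a \<alpha> \<eta>)) = F' (g \<eta>) * (if a = b then 2 * g \<eta> else 0)" for a \<eta>
  proof -
    have "(\<Sum>\<alpha>\<in>UNIV. P \<eta> $ b $ \<alpha> * (F' (g \<eta>) * K a \<alpha> \<eta>)) = F' (g \<eta>) * (\<Sum>\<alpha>\<in>UNIV. P \<eta> $ b $ \<alpha> * K a \<alpha> \<eta>)"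
      by (simp add: sum_distrib_left algebra_simps)
    also have "\<dots> = F' (g \<eta>) * (if a = b then 2 * g \<eta> else 0)"
      unfolding K_def gQ_row g_def P_def ..
    finally show ?thesis .
  qed
  have gbv: "gY V (X \<xi>) (P \<xi>) (DX (axis b 1)) + gQ V (X \<xi>) (P \<xi>) (DP (axis b 1)) = gb"
    using dirderiv_eq[OF hg, of "axis b 1"] gb_def by simp
  have Ra: "dirderiv (\<lambda>\<eta>. F' (g \<eta>) * (if a = b then 2 * g \<eta> else 0)) \<xi> (axis a 1)
     = (if a = b then 2 * (F' (g \<xi>) * gb + F'' (g \<xi>) * gb * g \<xi>) else 0)" for a
  proof (cases "a = b")
    case True
    have "((\<lambda>\<eta>. F' (g \<eta>) * (2 * g \<eta>)) has_derivative
       (\<lambda>v. F' (g \<xi>) * (2 * (gY V (X \<xi>) (P \<xi>) (DX v) + gQ V (X \<xi>) (P \<xi>) (DP v))) +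
            F'' (g \<xi>) * (gY V (X \<xi>) (P \<xi>) (DX v) + gQ V (X \<xi>) (P \<xi>) (DP v)) * (2 * g \<xi>))) (at \<xi>)"
      by (intro has_derivative_mult hFg has_derivative_mult_right hg)
    from dirderiv_eq[OF this, of "axis b 1"] show ?thesis using True by (simp add: gbv[symmetric] algebra_simps)
  next
    case False
    then show ?thesis by (simp add: dd_const)
  qed
  define S where "S = (\<Sum>a\<in>UNIV. \<Sum>\<alpha>\<in>UNIV. P2 a b \<alpha> * K a \<alpha> \<xi>)"
  have perA: "(\<Sum>\<alpha>\<in>UNIV. P \<xi> $ b $ \<alpha> * Dd a \<alpha>) =
      (if a = b then 2 * (F' (g \<xi>) * gb + F'' (g \<xi>) * gb * g \<xi>) else 0)
      - F' (g \<xi>) * (\<Sum>\<alpha>\<in>UNIV. P2 a b \<alpha> * K a \<alpha> \<xi>)" for a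
  proof -
    have "(\<lambda>\<eta>. \<Sum>\<alpha>\<in>UNIV. P \<eta> $ b $ \<alpha> * (F' (g \<eta>) * K a \<alpha> \<eta>)) = (\<lambda>\<eta>. F' (g \<eta>) * (if a = b then 2 * g \<eta> else 0))"
      using rowid by blast
    then have "(\<Sum>\<alpha>\<in>UNIV. P \<xi> $ b $ \<alpha> * Dd a \<alpha> + P2 a b \<alpha> * (F' (g \<xi>) * K a \<alpha> \<xi>))
       = (if a = b then 2 * (F' (g \<xi>) * gb + F'' (g \<xi>) * gb * g \<xi>) else 0)"
      using sumA[of a] Ra[of a] by simp
    then show ?thesis by (simp add: sum.distrib sum_distrib_left algebra_simps)
  qed
  have lhs: "(\<Sum>\<alpha>\<in>UNIV. P \<xi> $ b $ \<alpha> * (F' (g \<xi>) * gY V (X \<xi>) (P \<xi>) (axis \<alpha> 1))) = F' (g \<xi>) * gY V (X \<xi>) (P \<xi>) (P \<xi> $ b)"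
    using lin_expand1[OF gY_linear[of V "X \<xi>" "P \<xi>"], where w="P \<xi> $ b"] by (simp add: sum_distrib_left algebra_simps)
  have "(\<Sum>\<alpha>\<in>UNIV. P \<xi> $ b $ \<alpha> * (F' (g \<xi>) * gY V (X \<xi>) (P \<xi>) (axis \<alpha> 1)))
      = (\<Sum>\<alpha>\<in>UNIV. P \<xi> $ b $ \<alpha> * (\<Sum>a\<in>UNIV. Dd a \<alpha>))" using ELx by simp
  also have "\<dots> = (\<Sum>a\<in>UNIV. \<Sum>\<alpha>\<in>UNIV. P \<xi> $ b $ \<alpha> * Dd a \<alpha>)"
    unfolding sum_distrib_left by (rule sum.swap)
  also have "\<dots> = (\<Sum>a\<in>UNIV. (if a = b then 2 * (F' (g \<xi>) * gb + F'' (g \<xi>) * gb * g \<xi>) else 0)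
      - F' (g \<xi>) * (\<Sum>\<alpha>\<in>UNIV. P2 a b \<alpha> * K a \<alpha> \<xi>))" using perA by simp
  also have "\<dots> = 2 * (F' (g \<xi>) * gb + F'' (g \<xi>) * gb * g \<xi>) - F' (g \<xi>) * S"
    unfolding S_def by (simp add: sum_subtractf sum_distrib_left)
  finally have main: "F' (g \<xi>) * gY V (X \<xi>) (P \<xi>) (P \<xi> $ b) = 2 * (F' (g \<xi>) * gb + F'' (g \<xi>) * gb * g \<xi>) - F' (g \<xi>) * S"
    using lhs by simp
  have "gb = gY V (X \<xi>) (P \<xi>) (P \<xi> $ b) + S" using gb2 S_def by simp
  then have "(F' (g \<xi>) + 2 * g \<xi> * F'' (g \<xi>)) * gb = 0"
    using main by (simp add: algebra_simps)
  then show ?thesis unfolding gb_def .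
qed

lemma countable_by_basis:
  fixes A :: "'a set" and B :: "'b set"
  assumes "countable B" "\<And>y. y \<in> A \<Longrightarrow> \<exists>C\<in>B. R y C"
    "\<And>y y' C. y \<in> A \<Longrightarrow> y' \<in> A \<Longrightarrow> R y C \<Longrightarrow> R y' C \<Longrightarrow> y = y'"
  shows "countable A"
proof -
  define f where "f y = (SOME C. C \<in> B \<and> R y C)" for y
  have f: "f y \<in> B \<and> R y (f y)" if "y \<in> A" for y
    unfolding f_def using assms(2)[OF that] by (metis (mono_tags, lifting) someI_ex)
  have "inj_on f A" using f assms(3) by (metis inj_onI)
  moreover have "countable (f ` A)" using f by (intro countable_subset[OF _ assms(1)]) auto
  ultimately show ?thesis using countable_image_inj_on by blast
qed

lemma discrete_countable:
  fixes Z :: "real set"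
  assumes "discrete Z"
  shows "countable Z"
proof -
  obtain \<B> :: "real set set" where B: "countable \<B>" "\<And>C. C \<in> \<B> \<Longrightarrow> open C"
       "\<And>S. open S \<Longrightarrow> \<exists>U. U \<subseteq> \<B> \<and> S = \<Union>U"
    using univ_second_countable by blast
  show ?thesis
  proof (rule countable_by_basis[OF B(1), where R="\<lambda>z C. C \<inter> Z = {z}"])
    fix z assume "z \<in> Z"
    then have "z isolated_in Z" using assms discreteD by blast
    then obtain T where T: "z \<in> Z" "open T" "T \<inter> Z = {z}" by (rule isolated_inE)
    obtain U where U: "U \<subseteq> \<B>" "T = \<Union>U" using B(3)[OF T(2)] by blast
    then obtain C where "C \<in> U" "z \<in> C" using T by blast
    then have "C \<in> \<B>" "C \<inter> Z = {z}" using U T by auto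
    then show "\<exists>C\<in>\<B>. C \<inter> Z = {z}" by blast
  qed auto
qed

lemma const_on_connected:
  fixes g :: "real^'d::finite \<Rightarrow> real"
  assumes "connected S" "continuous_on S g" "countable Z" "open W" "W \<subseteq> S"
    "\<And>x. x \<in> S \<Longrightarrow> x \<notin> W \<Longrightarrow> g x \<in> Z"
    "\<And>x. x \<in> W \<Longrightarrow> (g has_derivative (\<lambda>h. 0)) (at x)"
  shows "\<exists>c. \<forall>x\<in>S. g x = c"
proof -
  obtain \<B> :: "(real^'d) set set" where B: "countable \<B>" "\<And>C. C \<in> \<B> \<Longrightarrow> open C"
       "\<And>S. open S \<Longrightarrow> \<exists>U. U \<subseteq> \<B> \<and> S = \<Union>U"
    using univ_second_countable by blast
  have cW: "countable (g ` W)"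
  proof (rule countable_by_basis[OF B(1), where R="\<lambda>y C. C \<noteq> {} \<and> (\<forall>z\<in>C. g z = y)"])
    fix y assume "y \<in> g ` W"
    then obtain x where x: "x \<in> W" "y = g x" by blast
    obtain r where r: "r > 0" "ball x r \<subseteq> W" using assms(4) x(1) open_contains_ball by blast
    have "\<exists>c. \<forall>z\<in>ball x r. g z = c"
    proof (rule has_derivative_zero_constant)
      fix z assume "z \<in> ball x r"
      then have "z \<in> W" using r by blast
      then show "(g has_derivative (\<lambda>h. 0)) (at z within ball x r)"
        by (rule has_derivative_at_withinI[OF assms(7)])
    qed simp
    then have const: "\<forall>z\<in>ball x r. g z = y" using x r by (metis centre_in_ball)
    obtain U where U: "U \<subseteq> \<B>" "ball x r = \<Union>U" using B(3)[of "ball x r"] by auto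
    then obtain C where "C \<in> U" "x \<in> C" using r by (metis UnionE centre_in_ball)
    then show "\<exists>C\<in>\<B>. C \<noteq> {} \<and> (\<forall>z\<in>C. g z = y)" using U const by blast
  qed auto
  have "g ` S \<subseteq> g ` W \<union> Z" using assms(5,6) by auto
  then have cS: "countable (g ` S)" using countable_subset[OF _ countable_Un[OF cW assms(3)]] by blast
  have conn: "connected (g ` S)" by (rule connected_continuous_image[OF assms(2,1)])
  show ?thesis
  proof (cases "S = {}")
    case True then show ?thesis by blast
  next
    case False
    then obtain x0 where x0: "x0 \<in> S" by blast
    have "g x = g x0" if "x \<in> S" for x
    proof (rule ccontr)
      assume "g x \<noteq> g x0"
      moreover have "g x \<in> g ` S" "g x0 \<in> g ` S" using that x0 by auto
      ultimately have "uncountable (g ` S)" using connected_uncountable[OF conn, of "g x" "g x0"] by blast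
      then show False using cS by blast
    qed
    then show ?thesis by blast
  qed
qed

lemma basic_diff:
  fixes \<Sigma> :: "(real^'d::finite) set"
    and M :: "(real^'D::finite) set"
    and V :: "real^'D \<Rightarrow> ('d \<Rightarrow> 'D) \<Rightarrow> ('d \<Rightarrow> 'D) \<Rightarrow> real"
    and X :: "real^'d \<Rightarrow> real^'D"
  assumes xi: "\<xi> \<in> \<Sigma>"
    and vdiff: "\<And>y \<mu> \<nu>. y \<in> M \<Longrightarrow> (\<lambda>y. V y \<mu> \<nu>) differentiable (at y)"
    and X_smooth: "\<forall>\<mu>. smooth_on \<Sigma> (\<lambda>\<xi>. X \<xi> $ \<mu>)"
    and X_into: "\<forall>\<xi>\<in>\<Sigma>. X \<xi> \<in> M"
  shows "(\<lambda>\<eta>. gamma_v V (X \<eta>) (jac X \<eta>)) differentiable (at \<xi>)"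
    and "(\<lambda>\<eta>. gQ V (X \<eta>) (jac X \<eta>) W) differentiable (at \<xi>)"
proof -
  define P where "P = jac X"
  have Pc: "P \<eta> $ a $ \<mu> = dirderiv (\<lambda>\<eta>. X \<eta> $ \<mu>) \<eta> (axis a 1)" for \<eta> a \<mu>
    unfolding P_def jac_def by simp
  have sm: "iter_partial is (\<lambda>\<eta>. X \<eta> $ \<mu>) differentiable (at \<eta>)" if "\<eta> \<in> \<Sigma>" for "is" \<mu> \<eta>
    using X_smooth that unfolding smooth_on_def by blast
  have Pfun: "(\<lambda>\<eta>. P \<eta> $ a $ \<mu>) = iter_partial [a] (\<lambda>\<eta>. X \<eta> $ \<mu>)" for a \<mu>
    by (simp add: Pc fun_eq_iff)
  have dX: "(\<lambda>\<eta>. X \<eta> $ \<mu>) differentiable (at \<eta>)" if "\<eta> \<in> \<Sigma>" for \<mu> \<eta>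
    using sm[OF that, of "[]" \<mu>] by simp
  have dP: "(\<lambda>\<eta>. P \<eta> $ a $ \<mu>) differentiable (at \<eta>)" if "\<eta> \<in> \<Sigma>" for a \<mu> \<eta>
    using sm[OF that, of "[a]" \<mu>] Pfun by simp
  have xM: "X \<xi> \<in> M" using X_into xi by blast
  have dVx: "(\<lambda>y. V y \<mu> \<nu>) differentiable (at (X \<xi>))" for \<mu> \<nu> using vdiff xM by blast
  define DX where "DX v = (\<chi> \<mu>. \<Sum>c\<in>UNIV. v$c * P \<xi> $ c $ \<mu>)" for v
  have hX: "(X has_derivative DX) (at \<xi>)"
    unfolding DX_def[abs_def]
    by (rule has_derivative_vecI) (use diff_expand[OF dX[OF xi]] in \<open>simp add: Pc\<close>)
  define DP where "DP v = (\<chi> a \<mu>. \<Sum>c\<in>UNIV. v$c * dirderiv (\<lambda>\<eta>. P \<eta> $ a $ \<mu>) \<xi> (axis c 1))" for v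
  have hP: "(P has_derivative DP) (at \<xi>)"
    unfolding DP_def[abs_def]
    by (rule has_derivative_mat) (use diff_expand[OF dP[OF xi]] in simp)
  show "(\<lambda>\<eta>. gamma_v V (X \<eta>) (jac X \<eta>)) differentiable (at \<xi>)"
  proof -
    have "((\<lambda>\<eta>. gamma_v V (X \<eta>) (P \<eta>)) has_derivative (\<lambda>v. gY V (X \<xi>) (P \<xi>) (DX v) + gQ V (X \<xi>) (P \<xi>) (DP v))) (at \<xi>)"
      by (rule gamma_chain[OF hX hP dVx])
    then show ?thesis unfolding P_def differentiable_def by blast
  qed
  have dXv: "X differentiable (at \<xi>)" using hX differentiableI by blast
  have dPv: "P differentiable (at \<xi>)" using hP differentiableI by blast
  have dVX: "(\<lambda>\<eta>. V (X \<eta>) \<mu> \<nu>) differentiable (at \<xi>)" for \<mu> \<nu>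
    using differentiable_compose[OF dVx dXv] .
  have dsP: "(\<lambda>\<eta>. dsig (P \<eta>) \<mu> W) differentiable (at \<xi>)" for \<mu> W
    using differentiable_compose[OF dsig_differentiable dPv] .
  have sP: "(\<lambda>\<eta>. sigma (P \<eta>) \<mu>) differentiable (at \<xi>)" for \<mu>
    using differentiable_compose[OF sigma_has_derivative[THEN differentiableI] dPv] .
  show "(\<lambda>\<eta>. gQ V (X \<eta>) (jac X \<eta>) W) differentiable (at \<xi>)"
    unfolding P_def[symmetric] gQ_def
    by (intro differentiable_sum differentiable_mult differentiable_add dVX dsP sP finite ballI)
qed

lemma part2:
  fixes \<Sigma> :: "(real^'d::finite) set"
    and M :: "(real^'D::finite) set"
    and V :: "real^'D \<Rightarrow> ('d \<Rightarrow> 'D) \<Rightarrow> ('d \<Rightarrow> 'D) \<Rightarrow> real"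
    and X :: "real^'d \<Rightarrow> real^'D"
    and F F' :: "real \<Rightarrow> real"
  assumes open_Sigma: "open \<Sigma>"
    and vdiff: "\<And>y \<mu> \<nu>. y \<in> M \<Longrightarrow> (\<lambda>y. V y \<mu> \<nu>) differentiable (at y)"
    and F_deriv: "\<forall>s>0. (F has_real_derivative F' s) (at s)"
    and X_smooth: "\<forall>\<mu>. smooth_on \<Sigma> (\<lambda>\<xi>. X \<xi> $ \<mu>)"
    and X_into: "\<forall>\<xi>\<in>\<Sigma>. X \<xi> \<in> M"
    and EL_F: "euler_lagrange (\<lambda>x P. F (gamma_v V x P)) \<Sigma> X"
    and const: "\<forall>\<xi>\<in>\<Sigma>. gamma_v V (X \<xi>) (jac X \<xi>) = c"
    and cpos: "c > 0" and Fc: "F' c \<noteq> 0"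
  shows "euler_lagrange (\<lambda>x P. gamma_v V x P) \<Sigma> X \<and>
         euler_lagrange (\<lambda>x P. sqrt (gamma_v V x P)) \<Sigma> X"
proof -
  define P where "P = jac X"
  define K where "K a \<alpha> \<eta> = gQ V (X \<eta>) (P \<eta>) (axis a (axis \<alpha> 1))" for a \<alpha> \<eta>
  have key: "gY V (X \<xi>) (P \<xi>) (axis \<alpha> 1) - (\<Sum>a\<in>UNIV. dirderiv (K a \<alpha>) \<xi> (axis a 1)) = 0
     \<and> (\<forall>a. K a \<alpha> differentiable (at \<xi>))
     \<and> (\<forall>\<mu> \<nu>. (\<lambda>y. V y \<mu> \<nu>) differentiable (at (X \<xi>)))"
    if xi: "\<xi> \<in> \<Sigma>" for \<xi> \<alpha>
  proof -
    have xM: "X \<xi> \<in> M" using X_into xi by blast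
    have dVx: "(\<lambda>y. V y \<mu> \<nu>) differentiable (at (X \<xi>))" for \<mu> \<nu> using vdiff xM by blast
    have dK: "K a \<alpha> differentiable (at \<xi>)" for a
      unfolding K_def[abs_def] P_def by (rule basic_diff(2)[OF xi _ X_smooth X_into]) (simp add: vdiff)
    have hF: "(F has_derivative (\<lambda>z. F' c * z)) (at c)"
      using F_deriv cpos has_field_derivative_imp_has_derivative by blast
    have gc: "gamma_v V (X \<eta>) (P \<eta>) = c" if "\<eta> \<in> \<Sigma>" for \<eta> using const that unfolding P_def by blast
    have T1: "dirderiv (\<lambda>y. F (gamma_v V y (P \<xi>))) (X \<xi>) (axis \<alpha> 1) = F' c * gY V (X \<xi>) (P \<xi>) (axis \<alpha> 1)"
    proof -
      have "((\<lambda>y. F (gamma_v V y (P \<xi>))) has_derivative (\<lambda>w. F' c * gY V (X \<xi>) (P \<xi>) w)) (at (X \<xi>))"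
      proof -
        have dy: "((\<lambda>y. gamma_v V y (P \<xi>)) has_derivative gY V (X \<xi>) (P \<xi>)) (at (X \<xi>))"
          by (rule gamma_dy) (rule dVx)
        have hF2: "(F has_derivative (\<lambda>z. F' c * z)) (at (gamma_v V (X \<xi>) (P \<xi>)))" using hF gc[OF xi] by simp
        show ?thesis using has_derivative_compose[OF dy hF2] .
      qed
      from dirderiv_eq[OF this] show ?thesis .
    qed
    have T2: "dirderiv (\<lambda>Q. F (gamma_v V (X \<eta>) Q)) (P \<eta>) (axis a (axis \<alpha> 1)) = F' c * K a \<alpha> \<eta>"
      if "\<eta> \<in> \<Sigma>" for a \<eta>
    proof -
      have "((\<lambda>Q. F (gamma_v V (X \<eta>) Q)) has_derivative (\<lambda>W. F' c * gQ V (X \<eta>) (P \<eta>) W)) (at (P \<eta>))"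
      proof -
        have dq: "((\<lambda>Q. gamma_v V (X \<eta>) Q) has_derivative gQ V (X \<eta>) (P \<eta>)) (at (P \<eta>))"
          by (rule gamma_dQ)
        have hF2: "(F has_derivative (\<lambda>z. F' c * z)) (at (gamma_v V (X \<eta>) (P \<eta>)))" using hF gc[OF that] by simp
        show ?thesis using has_derivative_compose[OF dq hF2] .
      qed
      from dirderiv_eq[OF this] show ?thesis unfolding K_def .
    qed
    have Dd: "dirderiv (\<lambda>\<eta>. dirderiv (\<lambda>Q. F (gamma_v V (X \<eta>) Q)) (P \<eta>) (axis a (axis \<alpha> 1))) \<xi> (axis a 1)
        = F' c * dirderiv (K a \<alpha>) \<xi> (axis a 1)" for a
    proof -
      have "dirderiv (\<lambda>\<eta>. dirderiv (\<lambda>Q. F (gamma_v V (X \<eta>) Q)) (P \<eta>) (axis a (axis \<alpha> 1))) \<xi> (axis a 1)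
          = dirderiv (\<lambda>\<eta>. F' c * K a \<alpha> \<eta>) \<xi> (axis a 1)"
        by (rule dd_cong[OF open_Sigma xi]) (simp add: T2)
      also have "\<dots> = F' c * dirderiv (K a \<alpha>) \<xi> (axis a 1)"
        using dd_mult[OF differentiable_const dK, of "F' c" a "axis a 1"] by (simp add: dd_const)
      finally show ?thesis .
    qed
    have "dirderiv (\<lambda>y. F (gamma_v V y (P \<xi>))) (X \<xi>) (axis \<alpha> 1) -
      (\<Sum>a\<in>UNIV. dirderiv (\<lambda>\<eta>. dirderiv (\<lambda>Q. F (gamma_v V (X \<eta>) Q)) (P \<eta>) (axis a (axis \<alpha> 1))) \<xi> (axis a 1)) = 0"
      using EL_F xi unfolding euler_lagrange_def P_def by blast
    then have "F' c * (gY V (X \<xi>) (P \<xi>) (axis \<alpha> 1) - (\<Sum>a\<in>UNIV. dirderiv (K a \<alpha>) \<xi> (axis a 1))) = 0"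
      unfolding T1 Dd by (simp add: sum_distrib_left right_diff_distrib)
    then show ?thesis using Fc dK dVx by simp
  qed
  have EL1: "euler_lagrange (\<lambda>x P. gamma_v V x P) \<Sigma> X"
    unfolding euler_lagrange_def
  proof (intro ballI allI)
    fix \<xi> \<alpha> assume xi: "\<xi> \<in> \<Sigma>"
    note k = key[OF xi, of \<alpha>]
    have t1: "dirderiv (\<lambda>y. gamma_v V y (jac X \<xi>)) (X \<xi>) (axis \<alpha> 1) = gY V (X \<xi>) (P \<xi>) (axis \<alpha> 1)"
    proof -
      have dy: "((\<lambda>y. gamma_v V y (P \<xi>)) has_derivative gY V (X \<xi>) (P \<xi>)) (at (X \<xi>))"
        by (rule gamma_dy) (use k in blast)
      show ?thesis using dirderiv_eq[OF dy] unfolding P_def .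
    qed
    have t2: "(\<lambda>\<eta>. dirderiv (\<lambda>Q. gamma_v V (X \<eta>) Q) (jac X \<eta>) (axis a (axis \<alpha> 1))) = K a \<alpha>" for a
    proof
      fix \<eta>
      have dq: "((\<lambda>Q. gamma_v V (X \<eta>) Q) has_derivative gQ V (X \<eta>) (P \<eta>)) (at (P \<eta>))"
        by (rule gamma_dQ)
      show "dirderiv (\<lambda>Q. gamma_v V (X \<eta>) Q) (jac X \<eta>) (axis a (axis \<alpha> 1)) = K a \<alpha> \<eta>"
        using dirderiv_eq[OF dq] unfolding K_def P_def .
    qed
    show "dirderiv (\<lambda>y. gamma_v V y (jac X \<xi>)) (X \<xi>) (axis \<alpha> 1) -
         (\<Sum>a\<in>UNIV. dirderiv (\<lambda>\<eta>. dirderiv (\<lambda>Q. gamma_v V (X \<eta>) Q) (jac X \<eta>) (axis a (axis \<alpha> 1))) \<xi> (axis a 1)) = 0"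
      unfolding t1 t2 using k by blast
  qed
  have EL2: "euler_lagrange (\<lambda>x P. sqrt (gamma_v V x P)) \<Sigma> X"
    unfolding euler_lagrange_def
  proof (intro ballI allI)
    fix \<xi> \<alpha> assume xi: "\<xi> \<in> \<Sigma>"
    note k = key[OF xi, of \<alpha>]
    define q where "q = inverse (sqrt c) / 2"
    have hs: "(sqrt has_derivative (\<lambda>z. q * z)) (at c)"
      unfolding q_def using DERIV_real_sqrt[OF cpos] has_field_derivative_imp_has_derivative by blast
    have gc: "gamma_v V (X \<eta>) (P \<eta>) = c" if "\<eta> \<in> \<Sigma>" for \<eta> using const that unfolding P_def by blast
    have t1: "dirderiv (\<lambda>y. sqrt (gamma_v V y (jac X \<xi>))) (X \<xi>) (axis \<alpha> 1) = q * gY V (X \<xi>) (P \<xi>) (axis \<alpha> 1)"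
    proof -
      have "((\<lambda>y. sqrt (gamma_v V y (P \<xi>))) has_derivative (\<lambda>w. q * gY V (X \<xi>) (P \<xi>) w)) (at (X \<xi>))"
      proof -
        have dy: "((\<lambda>y. gamma_v V y (P \<xi>)) has_derivative gY V (X \<xi>) (P \<xi>)) (at (X \<xi>))"
          by (rule gamma_dy) (use k in blast)
        have hs2: "(sqrt has_derivative (\<lambda>z. q * z)) (at (gamma_v V (X \<xi>) (P \<xi>)))" using hs gc[OF xi] by simp
        show ?thesis using has_derivative_compose[OF dy hs2] .
      qed
      from dirderiv_eq[OF this] show ?thesis unfolding P_def .
    qed
    have t2: "dirderiv (\<lambda>\<eta>. dirderiv (\<lambda>Q. sqrt (gamma_v V (X \<eta>) Q)) (jac X \<eta>) (axis a (axis \<alpha> 1))) \<xi> (axis a 1)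
       = q * dirderiv (K a \<alpha>) \<xi> (axis a 1)" for a
    proof -
      have in2: "dirderiv (\<lambda>Q. sqrt (gamma_v V (X \<eta>) Q)) (jac X \<eta>) (axis a (axis \<alpha> 1)) = q * K a \<alpha> \<eta>"
        if "\<eta> \<in> \<Sigma>" for \<eta>
      proof -
        have "((\<lambda>Q. sqrt (gamma_v V (X \<eta>) Q)) has_derivative (\<lambda>W. q * gQ V (X \<eta>) (P \<eta>) W)) (at (P \<eta>))"
        proof -
          have dq: "((\<lambda>Q. gamma_v V (X \<eta>) Q) has_derivative gQ V (X \<eta>) (P \<eta>)) (at (P \<eta>))"
            by (rule gamma_dQ)
          have hs2: "(sqrt has_derivative (\<lambda>z. q * z)) (at (gamma_v V (X \<eta>) (P \<eta>)))" using hs gc[OF that] by simp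
          show ?thesis using has_derivative_compose[OF dq hs2] .
        qed
        from dirderiv_eq[OF this] show ?thesis unfolding K_def P_def .
      qed
      have "dirderiv (\<lambda>\<eta>. dirderiv (\<lambda>Q. sqrt (gamma_v V (X \<eta>) Q)) (jac X \<eta>) (axis a (axis \<alpha> 1))) \<xi> (axis a 1)
          = dirderiv (\<lambda>\<eta>. q * K a \<alpha> \<eta>) \<xi> (axis a 1)"
        by (rule dd_cong[OF open_Sigma xi]) (simp add: in2)
      also have "\<dots> = q * dirderiv (K a \<alpha>) \<xi> (axis a 1)"
        using dd_mult[OF differentiable_const, of "K a \<alpha>" \<xi> q "axis a 1"] k by (simp add: dd_const)
      finally show ?thesis .
    qed
    have "q * (gY V (X \<xi>) (P \<xi>) (axis \<alpha> 1) - (\<Sum>a\<in>UNIV. dirderiv (K a \<alpha>) \<xi> (axis a 1))) = 0"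
      using k by simp
    then show "dirderiv (\<lambda>y. sqrt (gamma_v V y (jac X \<xi>))) (X \<xi>) (axis \<alpha> 1) -
         (\<Sum>a\<in>UNIV. dirderiv (\<lambda>\<eta>. dirderiv (\<lambda>Q. sqrt (gamma_v V (X \<eta>) Q)) (jac X \<eta>) (axis a (axis \<alpha> 1))) \<xi> (axis a 1)) = 0"
      unfolding t1 t2 by (simp add: sum_distrib_left right_diff_distrib)
  qed
  show ?thesis using EL1 EL2 by blast
qed

theorem mainTheorem4:
  fixes \<Sigma> :: "(real^'d::finite) set"
    and M :: "(real^'D::finite) set"
    and V :: "real^'D \<Rightarrow> ('d \<Rightarrow> 'D) \<Rightarrow> ('d \<Rightarrow> 'D) \<Rightarrow> real"
    and X :: "real^'d \<Rightarrow> real^'D"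
    and F F' F'' :: "real \<Rightarrow> real"
  assumes open_Sigma: "open \<Sigma>" and conn_Sigma: "connected \<Sigma>"
    and open_M: "open M"
    and vm: "volume_metric M V"
    and F_deriv: "\<forall>s>0. (F has_real_derivative F' s) (at s)"
    and F'_deriv: "\<forall>s>0. (F' has_real_derivative F'' s) (at s)"
    and F''_cont: "continuous_on {0<..} F''"
    and Z_discrete: "discrete {s::real. s > 0 \<and> 2 * s * F'' s + F' s = 0}"
    and X_smooth: "\<forall>\<mu>. smooth_on \<Sigma> (\<lambda>\<xi>. X \<xi> $ \<mu>)"
    and X_into: "\<forall>\<xi>\<in>\<Sigma>. X \<xi> \<in> M"
    and gamma_pos: "\<forall>\<xi>\<in>\<Sigma>. gamma_v V (X \<xi>) (jac X \<xi>) > 0"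
    and EL_F: "euler_lagrange (\<lambda>x P. F (gamma_v V x P)) \<Sigma> X"
  shows "\<exists>c>0. (\<forall>\<xi>\<in>\<Sigma>. gamma_v V (X \<xi>) (jac X \<xi>) = c) \<and>
           (F' c \<noteq> 0 \<longrightarrow>
              euler_lagrange (\<lambda>x P. gamma_v V x P) \<Sigma> X \<and>
              euler_lagrange (\<lambda>x P. sqrt (gamma_v V x P)) \<Sigma> X)"
proof -
  have vdiff: "(\<lambda>y. V y \<mu> \<nu>) differentiable (at y)" if "y \<in> M" for y \<mu> \<nu>
  proof -
    have "smooth_on M (\<lambda>x. V x \<mu> \<nu>)" using vm unfolding volume_metric_def by simp
    then have "iter_partial [] (\<lambda>x. V x \<mu> \<nu>) differentiable (at y)"
      using that unfolding smooth_on_def by blast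
    then show ?thesis by simp
  qed
  define g where "g = (\<lambda>\<eta>. gamma_v V (X \<eta>) (jac X \<eta>))"
  have gdiff: "g differentiable (at \<xi>)" if "\<xi> \<in> \<Sigma>" for \<xi>
    unfolding g_def by (rule basic_diff(1)[OF that _ X_smooth X_into]) (simp add: vdiff)
  have gpos: "g \<xi> > 0" if "\<xi> \<in> \<Sigma>" for \<xi> using gamma_pos that unfolding g_def by blast
  have gcont: "continuous_on \<Sigma> g"
    using gdiff differentiable_imp_continuous_within continuous_at_imp_continuous_on by blast
  define hh where "hh s = 2 * s * F'' s + F' s" for s
  define Z where "Z = {s::real. s > 0 \<and> 2 * s * F'' s + F' s = 0}"
  have cZ: "countable Z" unfolding Z_def by (rule discrete_countable[OF Z_discrete])
  have F'cont: "continuous_on {0<..} F'"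
    using F'_deriv DERIV_isCont continuous_at_imp_continuous_on by (metis greaterThan_iff)
  have hhcont: "continuous_on {0<..} hh"
    unfolding hh_def[abs_def] by (intro continuous_intros F''_cont F'cont)
  have hgcont: "continuous_on \<Sigma> (\<lambda>\<xi>. hh (g \<xi>))"
    by (rule continuous_on_compose2[OF hhcont gcont]) (use gpos in auto)
  define W where "W = {\<xi>\<in>\<Sigma>. hh (g \<xi>) \<noteq> 0}"
  have "open ((\<lambda>\<xi>. hh (g \<xi>)) -` (- {0}) \<inter> \<Sigma>)"
    using hgcont open_Sigma continuous_on_open_vimage by (metis open_Compl closed_singleton)
  moreover have "(\<lambda>\<xi>. hh (g \<xi>)) -` (- {0}) \<inter> \<Sigma> = W" unfolding W_def by auto
  ultimately have oW: "open W" by simp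
  have "\<exists>c. \<forall>x\<in>\<Sigma>. g x = c"
  proof (rule const_on_connected[OF conn_Sigma gcont cZ oW])
    show "W \<subseteq> \<Sigma>" unfolding W_def by auto
    show "g x \<in> Z" if "x \<in> \<Sigma>" "x \<notin> W" for x
      using that gpos[OF that(1)] unfolding W_def Z_def hh_def by auto
    show "(g has_derivative (\<lambda>h. 0)) (at x)" if "x \<in> W" for x
    proof -
      have xS: "x \<in> \<Sigma>" and hx: "hh (g x) \<noteq> 0" using that unfolding W_def by auto
      have "(F' (g x) + 2 * g x * F'' (g x)) * dirderiv g x (axis b 1) = 0" for b
        unfolding g_def
        by (rule noether[OF open_Sigma xS _ F_deriv F'_deriv X_smooth X_into gamma_pos EL_F]) (simp add: vdiff)
      moreover have "F' (g x) + 2 * g x * F'' (g x) \<noteq> 0" using hx unfolding hh_def by (simp add: algebra_simps)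
      ultimately have z: "dirderiv g x (axis b 1) = 0" for b by simp
      have "(g has_derivative (\<lambda>v. \<Sum>c\<in>UNIV. v$c * dirderiv g x (axis c 1))) (at x)"
        by (rule diff_expand[OF gdiff[OF xS]])
      then show ?thesis by (simp add: z)
    qed
  qed
  then obtain c0 where c0: "\<forall>x\<in>\<Sigma>. g x = c0" by blast
  show ?thesis
  proof (cases "\<Sigma> = {}")
    case True
    then show ?thesis unfolding euler_lagrange_def by (intro exI[of _ 1]) auto
  next
    case False
    then obtain x0 where x0: "x0 \<in> \<Sigma>" by blast
    have cpos: "c0 > 0" using gpos[OF x0] c0 x0 by auto
    have const: "\<forall>\<xi>\<in>\<Sigma>. gamma_v V (X \<xi>) (jac X \<xi>) = c0" using c0 unfolding g_def by blast
    show ?thesis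
    proof (intro exI[of _ c0] conjI impI)
      show "c0 > 0" by (rule cpos)
      show "\<forall>\<xi>\<in>\<Sigma>. gamma_v V (X \<xi>) (jac X \<xi>) = c0" by (rule const)
      assume Fc: "F' c0 \<noteq> 0"
      have "euler_lagrange (\<lambda>x P. gamma_v V x P) \<Sigma> X \<and> euler_lagrange (\<lambda>x P. sqrt (gamma_v V x P)) \<Sigma> X"
        by (rule part2[OF open_Sigma _ F_deriv X_smooth X_into EL_F const cpos Fc]) (simp add: vdiff)
      then show "euler_lagrange (\<lambda>x P. gamma_v V x P) \<Sigma> X" "euler_lagrange (\<lambda>x P. sqrt (gamma_v V x P)) \<Sigma> X"
        by blast+
    qed
  qed
qed


end
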